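(* Let $X\subseteq V_\Delta$ be finite such that $G_X$ is connected and $X$ has no holes. Then for all $u,v\in X$, $$2\cdot \mathrm{dist}(u,v)=\mathrm{dist}_x(u,v)+\mathrm{dist}_y(u,v)+\mathrm{dist}_z(u,v).$$
   Context: $G_\Delta=(V_\Delta,E_\Delta)$ is the infinite regular triangular grid graph; its edges are parallel to one of three axes $x,y,z$. For finite $X\subseteq V_\Delta$, $G_X$ is the subgraph of $G_\Delta$ induced by $X$; $X$ has no holes if the subgraph of $G_\Delta$ induced by $V_\Delta\setminus X$ is connected. For an axis $d\in\{x,y,z\}$, let $E_d$ be the set of edges of $G_X$ parallel to $d$; the $d$-portals are the vertex sets of the connected components of $(X,E_d)$, and $\mathrm{portal}_d(u)$ is the $d$-portal containing $u$. Two $d$-portals are adjacent if some edge of $G_X$ joins a node of one to a node of the other. The $d$-portal graph $\mathcal P_d$ has the $d$-portals as vertices, adjacent portals being joined by an edge. $\mathrm{dist}(u,v)$ is the distance between $u$ and $v$ in $G_X$, and $\mathrm{dist}_d(u,v)$ is the distance between $\mathrm{portal}_d(u)$ and $\mathrm{portal}_d(v)$ in $\mathcal P_d$. *)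

theory Defs
  imports Main
begin

text \<open>The triangular grid: vertices are integer points in axial coordinates
(i,j); the three axes correspond to the directions (1,0), (0,1), (1,-1).
Each vertex has exactly six neighbours.\<close>

datatype axis = AxX | AxY | AxZ

type_synonym vtx = "int \<times> int"

fun dirvec :: "axis \<Rightarrow> vtx" where
  "dirvec AxX = (1, 0)"
| "dirvec AxY = (0, 1)"
| "dirvec AxZ = (1, -1)"

definition shift :: "vtx \<Rightarrow> vtx \<Rightarrow> vtx" where
  "shift p v = (fst p + fst v, snd p + snd v)"

definition adj_dir :: "axis \<Rightarrow> vtx \<Rightarrow> vtx \<Rightarrow> bool" where
  "adj_dir d p q \<longleftrightarrow> q = shift p (dirvec d) \<or> p = shift q (dirvec d)"

definition tri_adj :: "vtx \<Rightarrow> vtx \<Rightarrow> bool" where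
  "tri_adj p q \<longleftrightarrow> (\<exists>d. adj_dir d p q)"

definition edges :: "vtx set \<Rightarrow> (vtx \<times> vtx) set" where
  "edges X = {(p, q). p \<in> X \<and> q \<in> X \<and> tri_adj p q}"

definition edges_dir :: "axis \<Rightarrow> vtx set \<Rightarrow> (vtx \<times> vtx) set" where
  "edges_dir d X = {(p, q). p \<in> X \<and> q \<in> X \<and> adj_dir d p q}"

definition induced_connected :: "vtx set \<Rightarrow> bool" where
  "induced_connected X \<longleftrightarrow> (\<forall>p\<in>X. \<forall>q\<in>X. (p, q) \<in> (edges X)\<^sup>*)"

definition no_holes :: "vtx set \<Rightarrow> bool" where
  "no_holes X \<longleftrightarrow> induced_connected (- X)"

definition gdist :: "('a \<times> 'a) set \<Rightarrow> 'a \<Rightarrow> 'a \<Rightarrow> nat" where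
  "gdist E a b = (LEAST n. (a, b) \<in> E ^^ n)"

definition dist :: "vtx set \<Rightarrow> vtx \<Rightarrow> vtx \<Rightarrow> nat" where
  "dist X u v = gdist (edges X) u v"

definition portal :: "axis \<Rightarrow> vtx set \<Rightarrow> vtx \<Rightarrow> vtx set" where
  "portal d X u = {v. (u, v) \<in> (edges_dir d X)\<^sup>*}"

definition portals :: "axis \<Rightarrow> vtx set \<Rightarrow> vtx set set" where
  "portals d X = portal d X ` X"

definition portal_edges :: "axis \<Rightarrow> vtx set \<Rightarrow> (vtx set \<times> vtx set) set" where
  "portal_edges d X = {(P, Q). P \<in> portals d X \<and> Q \<in> portals d X \<and> P \<noteq> Q \<and>
      (\<exists>p\<in>P. \<exists>q\<in>Q. (p, q) \<in> edges X)}"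

definition dist_dir :: "axis \<Rightarrow> vtx set \<Rightarrow> vtx \<Rightarrow> vtx \<Rightarrow> nat" where
  "dist_dir d X u v = gdist (portal_edges d X) (portal d X u) (portal d X v)"

end

theory Submission
  imports Defs
begin


definition Tm :: "axis \<Rightarrow> vtx \<Rightarrow> vtx" where
  "Tm d p = (case d of AxX \<Rightarrow> p | AxY \<Rightarrow> (snd p, fst p) | AxZ \<Rightarrow> (- snd p, fst p + snd p))"

definition mk :: "axis \<Rightarrow> vtx \<Rightarrow> vtx" where
  "mk d w = (case d of AxX \<Rightarrow> w | AxY \<Rightarrow> (snd w, fst w) | AxZ \<Rightarrow> (snd w + fst w, - fst w))"

lemma Tm_mk[simp]: "Tm d (mk d w) = w"
  by (cases d) (auto simp: Tm_def mk_def)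

lemma mk_Tm[simp]: "mk d (Tm d p) = p"
  by (cases d) (auto simp: Tm_def mk_def)

lemma Tm_inj: "Tm d p = Tm d q \<longleftrightarrow> p = q"
  by (metis mk_Tm)

lemma tri_adj_iff0: "tri_adj (a,b) (c,e) \<longleftrightarrow>
   (e = b \<and> (c = a + 1 \<or> c = a - 1)) \<or>
   (e = b + 1 \<and> (c = a \<or> c = a - 1)) \<or>
   (e = b - 1 \<and> (c = a \<or> c = a + 1))"
proof -
  have "tri_adj p q \<longleftrightarrow> adj_dir AxX p q \<or> adj_dir AxY p q \<or> adj_dir AxZ p q" for p q
    unfolding tri_adj_def by (metis axis.exhaust)
  then show ?thesis unfolding adj_dir_def shift_def
    by (simp; presburger)
qed

lemma tri_adj_iff: "tri_adj p q \<longleftrightarrow>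
   (snd q = snd p \<and> (fst q = fst p + 1 \<or> fst q = fst p - 1)) \<or>
   (snd q = snd p + 1 \<and> (fst q = fst p \<or> fst q = fst p - 1)) \<or>
   (snd q = snd p - 1 \<and> (fst q = fst p \<or> fst q = fst p + 1))"
  using tri_adj_iff0[of "fst p" "snd p" "fst q" "snd q"] by simp

lemma tri_adj_sym: "tri_adj p q \<Longrightarrow> tri_adj q p"
  unfolding tri_adj_iff by auto

lemma Tm_adj[simp]: "tri_adj (Tm d p) (Tm d q) \<longleftrightarrow> tri_adj p q"
  unfolding tri_adj_iff Tm_def by (cases d) auto

lemma adj_dir_Tm: "adj_dir d p q \<longleftrightarrow>
   (snd (Tm d q) = snd (Tm d p) \<and> (fst (Tm d q) = fst (Tm d p) + 1 \<or> fst (Tm d q) = fst (Tm d p) - 1))"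
  unfolding adj_dir_def shift_def Tm_def
  by (cases d) (auto simp add: prod_eq_iff)

lemma adj_dir_tri: "adj_dir d p q \<Longrightarrow> tri_adj p q"
  unfolding tri_adj_def by auto

lemma tri_dir_unique: "adj_dir d p q \<Longrightarrow> adj_dir d' p q \<Longrightarrow> d = d'"
  unfolding adj_dir_def shift_def
  by (cases d; cases d') (auto simp add: prod_eq_iff)

lemma tri_some_dir: "tri_adj p q \<Longrightarrow> \<exists>d. adj_dir d p q"
  unfolding tri_adj_def by auto

lemma tri_Tm_cases:
  assumes "tri_adj p q"
  shows "(snd (Tm d q) = snd (Tm d p) \<and> \<bar>fst (Tm d q) - fst (Tm d p)\<bar> = 1 \<and> adj_dir d p q) \<or>
         (snd (Tm d q) = snd (Tm d p) + 1 \<and> (fst (Tm d q) - fst (Tm d p) \<in> {0, -1}) \<and> \<not> adj_dir d p q) \<or>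
         (snd (Tm d q) = snd (Tm d p) - 1 \<and> (fst (Tm d q) - fst (Tm d p) \<in> {0, 1}) \<and> \<not> adj_dir d p q)"
proof -
  have "tri_adj (Tm d p) (Tm d q)" using assms by simp
  then show ?thesis unfolding tri_adj_iff adj_dir_Tm by auto
qed



lemma rtrancl_symm:
  assumes "\<And>x y. (x, y) \<in> R \<Longrightarrow> (y, x) \<in> R" and "(a, b) \<in> R\<^sup>*"
  shows "(b, a) \<in> R\<^sup>*"
proof -
  have "sym R" using assms(1) by (auto intro: symI)
  then have "sym (R\<^sup>*)" by (rule sym_rtrancl)
  then show ?thesis using assms(2) by (auto dest: symD)
qed

lemma relpow_mono_sub: fixes R S :: "'a rel" shows "R \<subseteq> S \<Longrightarrow> (x, y) \<in> R ^^ n \<Longrightarrow> (x, y) \<in> S ^^ n"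
proof (induction n arbitrary: y)
  case 0 thus ?case by simp
next
  case (Suc n)
  from Suc.prems(2) obtain z where "(x, z) \<in> R ^^ n" "(z, y) \<in> R" by (rule relpow_Suc_E)
  then show ?case using Suc by (meson relpow_Suc_I subsetD)
qed

lemma Tm_eta: "mk d (fst (Tm d p), snd (Tm d p)) = p"
  by simp

lemma ED_step: "(x, y) \<in> edges_dir d X \<Longrightarrow> x \<in> X \<and> y \<in> X \<and> snd (Tm d y) = snd (Tm d x) \<and>
    (fst (Tm d y) = fst (Tm d x) + 1 \<or> fst (Tm d y) = fst (Tm d x) - 1)"
  unfolding edges_dir_def adj_dir_Tm by auto

lemma ED_sym: "(x, y) \<in> edges_dir d X \<Longrightarrow> (y, x) \<in> edges_dir d X"
  unfolding edges_dir_def adj_dir_def by auto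

lemma ED_sub: "edges_dir d X \<subseteq> edges X"
  unfolding edges_dir_def edges_def using adj_dir_tri by auto

lemma P1:
  assumes "p \<in> X" "(p, w) \<in> (edges_dir d X)\<^sup>*"
  shows "snd (Tm d w) = snd (Tm d p) \<and> (\<forall>f. min (fst (Tm d p)) (fst (Tm d w)) \<le> f \<and>
            f \<le> max (fst (Tm d p)) (fst (Tm d w)) \<longrightarrow> mk d (f, snd (Tm d p)) \<in> X)"
  using assms(2)
proof (induction rule: rtrancl_induct)
  case base
  then show ?case using assms(1) by (auto simp: Tm_eta)
next
  case (step y z)
  from ED_step[OF step(2)] have s: "z \<in> X" "snd (Tm d z) = snd (Tm d y)"
    "fst (Tm d z) = fst (Tm d y) + 1 \<or> fst (Tm d z) = fst (Tm d y) - 1" by auto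
  show ?case
  proof (intro conjI allI impI)
    show "snd (Tm d z) = snd (Tm d p)" using s step by simp
  next
    fix f assume f: "min (fst (Tm d p)) (fst (Tm d z)) \<le> f \<and> f \<le> max (fst (Tm d p)) (fst (Tm d z))"
    show "mk d (f, snd (Tm d p)) \<in> X"
    proof (cases "f = fst (Tm d z)")
      case True
      then have "mk d (f, snd (Tm d p)) = z" using s step.IH
        by (metis Tm_eta)
      then show ?thesis using s by simp
    next
      case False
      then have "min (fst (Tm d p)) (fst (Tm d y)) \<le> f \<and> f \<le> max (fst (Tm d p)) (fst (Tm d y))"
        using f s(3) by auto
      then show ?thesis using step.IH by blast
    qed
  qed
qed

lemma P2:
  assumes "snd (Tm d w) = snd (Tm d p)"
    and "\<forall>f. min (fst (Tm d p)) (fst (Tm d w)) \<le> f \<and> f \<le> max (fst (Tm d p)) (fst (Tm d w))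
             \<longrightarrow> mk d (f, snd (Tm d p)) \<in> X"
  shows "(p, w) \<in> (edges_dir d X) ^^ nat \<bar>fst (Tm d w) - fst (Tm d p)\<bar>"
  using assms
proof (induction "nat \<bar>fst (Tm d w) - fst (Tm d p)\<bar>" arbitrary: w)
  case 0
  then have "Tm d w = Tm d p" by (simp add: prod_eq_iff)
  then show ?case using 0 by (simp add: Tm_inj)
next
  case (Suc n)
  define s where "s = (if fst (Tm d w) > fst (Tm d p) then 1 else -1::int)"
  define w' where "w' = mk d (fst (Tm d w) - s, snd (Tm d p))"
  have Tw': "Tm d w' = (fst (Tm d w) - s, snd (Tm d p))" by (simp add: w'_def)
  have n: "n = nat \<bar>fst (Tm d w') - fst (Tm d p)\<bar>" using Suc(2) Tw' unfolding s_def by auto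
  have "\<forall>f. min (fst (Tm d p)) (fst (Tm d w')) \<le> f \<and> f \<le> max (fst (Tm d p)) (fst (Tm d w'))
             \<longrightarrow> mk d (f, snd (Tm d p)) \<in> X"
  proof (intro allI impI)
    fix f assume "min (fst (Tm d p)) (fst (Tm d w')) \<le> f \<and> f \<le> max (fst (Tm d p)) (fst (Tm d w'))"
    then have "min (fst (Tm d p)) (fst (Tm d w)) \<le> f \<and> f \<le> max (fst (Tm d p)) (fst (Tm d w))"
      using Suc(2) Tw' unfolding s_def min_def max_def by (auto split: if_splits)
    then show "mk d (f, snd (Tm d p)) \<in> X" using Suc(4) by blast
  qed
  then have IH: "(p, w') \<in> (edges_dir d X) ^^ n" using Suc(1)[OF n] Tw' n by auto
  have "w' \<in> X" using Suc(4) Tw' Suc(2) unfolding w'_def s_def by auto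
  moreover have "w \<in> X"
    using Suc(4)[rule_format, of "fst (Tm d w)"] Suc(3) by (metis Tm_eta max.cobounded2 min.cobounded2)
  moreover have "adj_dir d w' w" unfolding adj_dir_Tm using Tw' Suc(3) unfolding s_def by auto
  ultimately have "(w', w) \<in> edges_dir d X" unfolding edges_dir_def by auto
  with IH show ?case using Suc(2) by (metis relpow_Suc_I)
qed

lemma portal_mem:
  assumes "p \<in> X"
  shows "w \<in> portal d X p \<longleftrightarrow> snd (Tm d w) = snd (Tm d p) \<and> (\<forall>f. min (fst (Tm d p)) (fst (Tm d w)) \<le> f \<and>
            f \<le> max (fst (Tm d p)) (fst (Tm d w)) \<longrightarrow> mk d (f, snd (Tm d p)) \<in> X)"
  unfolding portal_def using P1[OF assms] P2 relpow_imp_rtrancl by blast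

lemma portal_self: "p \<in> X \<Longrightarrow> p \<in> portal d X p"
  unfolding portal_def by simp

lemma portal_eq:
  assumes "w \<in> portal d X p" shows "portal d X w = portal d X p"
proof -
  have pw: "(p, w) \<in> (edges_dir d X)\<^sup>*" using assms unfolding portal_def by simp
  then have wp: "(w, p) \<in> (edges_dir d X)\<^sup>*" using rtrancl_symm[OF ED_sym] by blast
  show ?thesis unfolding portal_def using pw wp by (auto intro: rtrancl_trans)
qed

lemma portal_line: "p \<in> X \<Longrightarrow> w \<in> portal d X p \<Longrightarrow> snd (Tm d w) = snd (Tm d p)"
  using portal_mem by blast

lemma portal_subX: "p \<in> X \<Longrightarrow> w \<in> portal d X p \<Longrightarrow> w \<in> X"
  using portal_mem[of p X w d] by (metis Tm_eta max.cobounded2 min.cobounded2)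

lemma portal_walk:
  assumes "p \<in> X" "w \<in> portal d X p"
  shows "(p, w) \<in> (edges X) ^^ nat \<bar>fst (Tm d w) - fst (Tm d p)\<bar>"
proof -
  have "(p, w) \<in> (edges_dir d X) ^^ nat \<bar>fst (Tm d w) - fst (Tm d p)\<bar>"
    using P2 portal_mem[OF assms(1)] assms(2) by blast
  then show ?thesis using relpow_mono_sub[OF ED_sub] by blast
qed

lemma seg_exists:
  assumes "finite X" "p \<in> X"
  shows "\<exists>p1 p2. p1 \<le> fst (Tm d p) \<and> fst (Tm d p) \<le> p2 \<and>
     (\<forall>f. p1 \<le> f \<and> f \<le> p2 \<longrightarrow> mk d (f, snd (Tm d p)) \<in> X) \<and>
     mk d (p1 - 1, snd (Tm d p)) \<notin> X \<and> mk d (p2 + 1, snd (Tm d p)) \<notin> X"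
proof -
  define l where "l = snd (Tm d p)"
  define a where "a = fst (Tm d p)"
  define S where "S = {f. mk d (f, l) \<in> X}"
  have "inj_on (\<lambda>f. mk d (f, l)) S" by (rule inj_onI) (metis Tm_mk prod.inject)
  then have finS: "finite S" using finite_imageD[of "\<lambda>f. mk d (f, l)" S] assms(1)
    by (metis (no_types, lifting) S_def finite_subset image_subset_iff mem_Collect_eq)
  define A where "A = {f. f \<le> a \<and> (\<forall>g. f \<le> g \<and> g \<le> a \<longrightarrow> g \<in> S)}"
  define B where "B = {f. a \<le> f \<and> (\<forall>g. a \<le> g \<and> g \<le> f \<longrightarrow> g \<in> S)}"
  have aS: "a \<in> S" unfolding S_def a_def l_def using assms(2) by simp
  have finA: "finite A" using finS unfolding A_def by (rule finite_subset[rotated]) auto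
  have finB: "finite B" using finS unfolding B_def by (rule finite_subset[rotated]) auto
  have aA: "a \<in> A" and aB: "a \<in> B" using aS unfolding A_def B_def by auto
  define p1 where "p1 = Min A"
  define p2 where "p2 = Max B"
  have p1A: "p1 \<in> A" unfolding p1_def using finA aA Min_in by blast
  have p2B: "p2 \<in> B" unfolding p2_def using finB aB Max_in by blast
  have "p1 - 1 \<notin> S"
  proof
    assume "p1 - 1 \<in> S"
    then have "p1 - 1 \<in> A" using p1A unfolding A_def
      by (auto, metis (no_types) int_one_le_iff_zero_less le_less not_less zle_diff1_eq)
    then have "p1 \<le> p1 - 1" unfolding p1_def using finA Min_le by blast
    then show False by simp
  qed
  moreover have "p2 + 1 \<notin> S"
  proof
    assume "p2 + 1 \<in> S"
    then have "p2 + 1 \<in> B" using p2B unfolding B_def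
      by (auto, metis (no_types) le_less not_less zless_imp_add1_zle)
    then have "p2 + 1 \<le> p2" unfolding p2_def using finB Max_ge by blast
    then show False by simp
  qed
  moreover have "\<forall>f. p1 \<le> f \<and> f \<le> p2 \<longrightarrow> f \<in> S"
  proof (intro allI impI)
    fix f assume f: "p1 \<le> f \<and> f \<le> p2"
    show "f \<in> S"
    proof (cases "f \<le> a")
      case True then show ?thesis using p1A f unfolding A_def by blast
    next
      case False then show ?thesis using p2B f unfolding B_def by auto
    qed
  qed
  ultimately show ?thesis using p1A p2B unfolding S_def A_def B_def a_def l_def by blast
qed

lemma seg_portal:
  assumes "p \<in> X" "w \<in> X" "snd (Tm d w) = snd (Tm d p)" "p1 \<le> fst (Tm d p)" "fst (Tm d p) \<le> p2"
    "\<forall>f. p1 \<le> f \<and> f \<le> p2 \<longrightarrow> mk d (f, snd (Tm d p)) \<in> X"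
    "p1 \<le> fst (Tm d w)" "fst (Tm d w) \<le> p2"
  shows "portal d X w = portal d X p"
proof -
  have "w \<in> portal d X p" unfolding portal_mem[OF assms(1)]
  proof (intro conjI allI impI)
    fix f assume "min (fst (Tm d p)) (fst (Tm d w)) \<le> f \<and> f \<le> max (fst (Tm d p)) (fst (Tm d w))"
    then have "p1 \<le> f \<and> f \<le> p2" using assms(4,5,7,8) unfolding min_def max_def by (auto split: if_splits)
    then show "mk d (f, snd (Tm d p)) \<in> X" using assms(6) by blast
  qed (use assms(3) in auto)
  then show ?thesis by (rule portal_eq)
qed



definition strip :: "int \<Rightarrow> vtx \<Rightarrow> vtx \<Rightarrow> bool" where
  "strip b x y \<longleftrightarrow> (snd x = b \<and> snd y = b + 1) \<or> (snd x = b + 1 \<and> snd y = b)"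

definition kap :: "vtx \<Rightarrow> vtx \<Rightarrow> int" where
  "kap x y = fst x + fst y"

definition Mc :: "(nat \<Rightarrow> vtx) \<Rightarrow> nat \<Rightarrow> int \<Rightarrow> int \<Rightarrow> nat" where
  "Mc G m b t = card {k. k < m \<and> strip b (G k) (G (Suc k)) \<and> t < kap (G k) (G (Suc k))}"

definition Nc :: "(nat \<Rightarrow> vtx) \<Rightarrow> nat \<Rightarrow> vtx \<Rightarrow> nat" where
  "Nc G m z = Mc G m (snd z) (2 * fst z)"

definition cwalk :: "(nat \<Rightarrow> vtx) \<Rightarrow> nat \<Rightarrow> bool" where
  "cwalk G m \<longleftrightarrow> G 0 = G m \<and> (\<forall>k<m. tri_adj (G k) (G (Suc k)))"

lemma cut_parity_gen:
  "odd (card {k. k < m \<and> (G k \<in> A) \<noteq> (G (Suc k) \<in> A)}) \<longleftrightarrow> (G 0 \<in> A) \<noteq> (G m \<in> A)"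
proof (induction m)
  case 0 then show ?case by simp
next
  case (Suc m)
  let ?S = "\<lambda>m. {k. k < m \<and> (G k \<in> A) \<noteq> (G (Suc k) \<in> A)}"
  have fin: "finite (?S m)" by (rule finite_subset[of _ "{..<m}"]) auto
  show ?case
  proof (cases "(G m \<in> A) \<noteq> (G (Suc m) \<in> A)")
    case True
    then have "?S (Suc m) = insert m (?S m)" by (auto simp: less_Suc_eq)
    then have "card (?S (Suc m)) = Suc (card (?S m))" using fin by simp
    then show ?thesis using Suc.IH True by simp
  next
    case False
    then have "?S (Suc m) = ?S m" by (auto simp: less_Suc_eq)
    then show ?thesis using Suc.IH False by simp
  qed
qed

lemma cut_parity: "G 0 = G m \<Longrightarrow> even (card {k. k < m \<and> (G k \<in> A) \<noteq> (G (Suc k) \<in> A)})"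
  using cut_parity_gen[where G=G and m=m and A=A] by simp

lemma M_split:
  assumes "t \<le> t'"
  shows "Mc G m b t = Mc G m b t' + card {k. k < m \<and> strip b (G k) (G (Suc k)) \<and> t < kap (G k) (G (Suc k)) \<and> kap (G k) (G (Suc k)) \<le> t'}"
proof -
  let ?A = "{k. k < m \<and> strip b (G k) (G (Suc k)) \<and> t' < kap (G k) (G (Suc k))}"
  let ?B = "{k. k < m \<and> strip b (G k) (G (Suc k)) \<and> t < kap (G k) (G (Suc k)) \<and> kap (G k) (G (Suc k)) \<le> t'}"
  have "{k. k < m \<and> strip b (G k) (G (Suc k)) \<and> t < kap (G k) (G (Suc k))} = ?A \<union> ?B"
    using assms by auto
  moreover have "?A \<inter> ?B = {}" by auto
  ultimately show ?thesis unfolding Mc_def by (simp add: card_Un_disjoint)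
qed

lemma M_eq:
  assumes "t \<le> t'"
    and "\<And>k. k < m \<Longrightarrow> strip b (G k) (G (Suc k)) \<Longrightarrow> t < kap (G k) (G (Suc k)) \<Longrightarrow> kap (G k) (G (Suc k)) \<le> t' \<Longrightarrow> False"
  shows "Mc G m b t = Mc G m b t'"
proof -
  have "{k. k < m \<and> strip b (G k) (G (Suc k)) \<and> t < kap (G k) (G (Suc k)) \<and> kap (G k) (G (Suc k)) \<le> t'} = {}"
    using assms(2) by blast
  then show ?thesis using M_split[OF assms(1)] by simp
qed

lemma step_cut:
  assumes "tri_adj x y" "x \<noteq> z" "y \<noteq> z"
  shows "((snd x = snd z \<and> fst x > fst z) \<noteq> (snd y = snd z \<and> fst y > fst z)) \<longleftrightarrow>
     (strip (snd z) x y \<and> 2 * fst z < kap x y) \<or> (strip (snd z - 1) x y \<and> 2 * fst z + 1 < kap x y)"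
proof -
  obtain x1 x2 where x: "x = (x1, x2)" by (cases x)
  obtain a c where z: "z = (a, c)" by (cases z)
  have "y = (x1 + 1, x2) \<or> y = (x1 - 1, x2) \<or> y = (x1, x2 + 1) \<or> y = (x1 - 1, x2 + 1) \<or>
        y = (x1, x2 - 1) \<or> y = (x1 + 1, x2 - 1)"
    using assms(1) unfolding x tri_adj_iff by (auto simp: prod_eq_iff)
  then show ?thesis using assms(2,3) unfolding x z strip_def kap_def
    by (elim disjE) (simp_all; arith)+
qed

lemma NN':
  assumes "cwalk G m" "\<forall>k\<le>m. G k \<noteq> z"
  shows "even (Mc G m (snd z) (2 * fst z) + Mc G m (snd z - 1) (2 * fst z + 1))"
proof -
  let ?A = "{w. snd w = snd z \<and> fst w > fst z}"
  let ?S1 = "{k. k < m \<and> strip (snd z) (G k) (G (Suc k)) \<and> 2 * fst z < kap (G k) (G (Suc k))}"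
  let ?S2 = "{k. k < m \<and> strip (snd z - 1) (G k) (G (Suc k)) \<and> 2 * fst z + 1 < kap (G k) (G (Suc k))}"
  have "{k. k < m \<and> (G k \<in> ?A) \<noteq> (G (Suc k) \<in> ?A)} = ?S1 \<union> ?S2"
  proof (intro set_eqI iffI)
    fix k assume "k \<in> {k. k < m \<and> (G k \<in> ?A) \<noteq> (G (Suc k) \<in> ?A)}"
    then have k: "k < m" "(G k \<in> ?A) \<noteq> (G (Suc k) \<in> ?A)" by auto
    have "tri_adj (G k) (G (Suc k))" "G k \<noteq> z" "G (Suc k) \<noteq> z" using assms k(1) unfolding cwalk_def by auto
    from step_cut[OF this] k show "k \<in> ?S1 \<union> ?S2" by auto
  next
    fix k assume "k \<in> ?S1 \<union> ?S2"
    then have k: "k < m" "(strip (snd z) (G k) (G (Suc k)) \<and> 2 * fst z < kap (G k) (G (Suc k))) \<or> (strip (snd z - 1) (G k) (G (Suc k)) \<and> 2 * fst z + 1 < kap (G k) (G (Suc k)))" by auto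
    have "tri_adj (G k) (G (Suc k))" "G k \<noteq> z" "G (Suc k) \<noteq> z" using assms k(1) unfolding cwalk_def by auto
    from step_cut[OF this] k show "k \<in> {k. k < m \<and> (G k \<in> ?A) \<noteq> (G (Suc k) \<in> ?A)}" by auto
  qed
  moreover have "?S1 \<inter> ?S2 = {}" unfolding strip_def by auto
  moreover have "even (card {k. k < m \<and> (G k \<in> ?A) \<noteq> (G (Suc k) \<in> ?A)})"
    using assms(1) cut_parity unfolding cwalk_def by blast
  ultimately show ?thesis unfolding Mc_def by (simp add: card_Un_disjoint)
qed

lemma J1a:
  assumes "cwalk G m" "\<forall>k\<le>m. G k \<noteq> z" "\<forall>k\<le>m. G k \<noteq> z'"
    and "z' = (fst z + 1, snd z) \<or> z' = (fst z, snd z + 1) \<or> z' = (fst z + 1, snd z - 1)"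
  shows "even (Nc G m z + Nc G m z')"
proof -
  have adj: "\<And>k. k < m \<Longrightarrow> tri_adj (G k) (G (Suc k)) \<and> G k \<noteq> z' \<and> G (Suc k) \<noteq> z'"
    using assms unfolding cwalk_def by auto
  from assms(4) consider "z' = (fst z + 1, snd z)" | "z' = (fst z, snd z + 1)" | "z' = (fst z + 1, snd z - 1)"
    by blast
  then show ?thesis
  proof cases
    case 1
    have "Mc G m (snd z) (2 * fst z) = Mc G m (snd z) (2 * fst z + 2)"
    proof (rule M_eq)
      fix k assume "k < m" "strip (snd z) (G k) (G (Suc k))" "2 * fst z < kap (G k) (G (Suc k))"
        "kap (G k) (G (Suc k)) \<le> 2 * fst z + 2"
      then show False using adj[of k] 1 unfolding strip_def kap_def
        by (cases "G k"; cases "G (Suc k)"; cases z) (auto simp: tri_adj_iff0)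
    qed simp
    then show ?thesis unfolding Nc_def using 1 by (simp add: algebra_simps)
  next
    case 2
    have e: "even (Mc G m (snd z') (2 * fst z') + Mc G m (snd z' - 1) (2 * fst z' + 1))"
      using NN'[OF assms(1,3)] .
    have "Mc G m (snd z) (2 * fst z) = Mc G m (snd z) (2 * fst z + 1)"
    proof (rule M_eq)
      fix k assume "k < m" "strip (snd z) (G k) (G (Suc k))" "2 * fst z < kap (G k) (G (Suc k))"
        "kap (G k) (G (Suc k)) \<le> 2 * fst z + 1"
      then show False using adj[of k] 2 unfolding strip_def kap_def
        by (cases "G k"; cases "G (Suc k)"; cases z) (auto simp: tri_adj_iff0)
    qed simp
    then show ?thesis unfolding Nc_def using 2 e by (simp add: algebra_simps)
  next
    case 3
    have e: "even (Mc G m (snd z) (2 * fst z) + Mc G m (snd z - 1) (2 * fst z + 1))"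
      using NN'[OF assms(1,2)] .
    have "Mc G m (snd z - 1) (2 * fst z + 1) = Mc G m (snd z - 1) (2 * fst z + 2)"
    proof (rule M_eq)
      fix k assume "k < m" "strip (snd z - 1) (G k) (G (Suc k))" "2 * fst z + 1 < kap (G k) (G (Suc k))"
        "kap (G k) (G (Suc k)) \<le> 2 * fst z + 2"
      then show False using adj[of k] 3 unfolding strip_def kap_def
        by (cases "G k"; cases "G (Suc k)"; cases z) (auto simp: tri_adj_iff0)
    qed simp
    then show ?thesis unfolding Nc_def using 3 e by (simp add: algebra_simps)
  qed
qed

lemma J1:
  assumes "cwalk G m" "\<forall>k\<le>m. G k \<noteq> z" "\<forall>k\<le>m. G k \<noteq> z'" "tri_adj z z'"
  shows "even (Nc G m z + Nc G m z')"
proof -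
  have "(z' = (fst z + 1, snd z) \<or> z' = (fst z, snd z + 1) \<or> z' = (fst z + 1, snd z - 1)) \<or>
        (z = (fst z' + 1, snd z') \<or> z = (fst z', snd z' + 1) \<or> z = (fst z' + 1, snd z' - 1))"
    using assms(4) unfolding tri_adj_iff by (auto simp: prod_eq_iff)
  then show ?thesis
    using J1a[OF assms(1,2,3)] J1a[OF assms(1,3,2)] by (auto simp: add.commute)
qed

lemma J1_path:
  assumes "cwalk G m" "\<forall>k\<le>m. G k \<notin> S"
    and "(z, z') \<in> {(a, b). tri_adj a b \<and> a \<in> S \<and> b \<in> S}\<^sup>*" "z \<in> S"
  shows "even (Nc G m z + Nc G m z')"
  using assms(3)
proof (induction rule: rtrancl_induct)
  case base then show ?case by simp
next
  case (step y w)
  have "y \<in> S" "w \<in> S" "tri_adj y w" using step(2) by auto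
  then have "\<forall>k\<le>m. G k \<noteq> y" "\<forall>k\<le>m. G k \<noteq> w" using assms(2) by auto
  then have "even (Nc G m y + Nc G m w)" using J1[OF assms(1)] \<open>tri_adj y w\<close> by blast
  then show ?case using step.IH by presburger
qed



lemma edges_sym: "(x, y) \<in> edges X \<Longrightarrow> (y, x) \<in> edges X"
  unfolding edges_def using tri_adj_sym by auto

lemma PE_sym: "(A, B) \<in> portal_edges d X \<Longrightarrow> (B, A) \<in> portal_edges d X"
  unfolding portal_edges_def using edges_sym by blast

lemma portal_of_mem:
  assumes "B \<in> portals d X" "x \<in> B" shows "portal d X x = B"
proof -
  obtain w where "w \<in> X" "B = portal d X w" using assms(1) unfolding portals_def by auto
  then show ?thesis using assms(2) portal_eq by blast
qed

definition Good :: "axis \<Rightarrow> vtx set \<Rightarrow> vtx set \<Rightarrow> vtx set \<Rightarrow> (vtx \<times> vtx) set" where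
  "Good d X P Q = {(x, y). (x, y) \<in> edges X \<and> (portal d X x, portal d X y) \<notin> {(P, Q), (Q, P)}}"

lemma ED_Good:
  assumes "P \<noteq> Q" shows "edges_dir d X \<subseteq> Good d X P Q"
proof
  fix e assume e: "e \<in> edges_dir d X"
  obtain x y where xy: "e = (x, y)" by (cases e)
  have "x \<in> X" using ED_step e xy by blast
  have "y \<in> portal d X x" unfolding portal_def using e xy by auto
  then have "portal d X y = portal d X x" by (rule portal_eq)
  then show "e \<in> Good d X P Q" unfolding Good_def using e xy ED_sub assms by auto
qed

lemma V:
  assumes "(A, B) \<in> (portal_edges d X - {(P, Q), (Q, P)})\<^sup>*" "a \<in> X" "A = portal d X a" "P \<noteq> Q"
  shows "\<forall>b\<in>B. (a, b) \<in> (Good d X P Q)\<^sup>*"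
  using assms(1)
proof (induction rule: rtrancl_induct)
  case base
  show ?case
  proof
    fix b assume "b \<in> A"
    then have "(a, b) \<in> (edges_dir d X)\<^sup>*" using assms(3) unfolding portal_def by auto
    then show "(a, b) \<in> (Good d X P Q)\<^sup>*" using rtrancl_mono[OF ED_Good[OF assms(4)]] by blast
  qed
next
  case (step B C)
  from step(2) have BC: "B \<in> portals d X" "C \<in> portals d X" "(B, C) \<notin> {(P, Q), (Q, P)}"
    and "\<exists>x\<in>B. \<exists>y\<in>C. (x, y) \<in> edges X" unfolding portal_edges_def by auto
  then obtain x y where xy: "x \<in> B" "y \<in> C" "(x, y) \<in> edges X" by blast
  have px: "portal d X x = B" using portal_of_mem BC xy by blast
  have py: "portal d X y = C" using portal_of_mem BC xy by blast
  have "(x, y) \<in> Good d X P Q" unfolding Good_def using xy px py BC by auto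
  then have ay: "(a, y) \<in> (Good d X P Q)\<^sup>*" using step.IH xy(1) by (meson rtrancl.rtrancl_into_rtrancl)
  show ?case
  proof
    fix c assume "c \<in> C"
    then have "(y, c) \<in> (edges_dir d X)\<^sup>*" using py unfolding portal_def by auto
    then have "(y, c) \<in> (Good d X P Q)\<^sup>*" using rtrancl_mono[OF ED_Good[OF assms(4)]] by blast
    then show "(a, c) \<in> (Good d X P Q)\<^sup>*" using ay by (meson rtrancl_trans)
  qed
qed

lemma T_path:
  assumes "(a, b) \<in> (edges Y)\<^sup>*"
  shows "(Tm d a, Tm d b) \<in> {(x, y). tri_adj x y \<and> x \<in> {w. mk d w \<in> Y} \<and> y \<in> {w. mk d w \<in> Y}}\<^sup>*"
  using assms
proof (induction rule: rtrancl_induct)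
  case base then show ?case by simp
next
  case (step y z)
  then have "(Tm d y, Tm d z) \<in> {(x, y). tri_adj x y \<and> x \<in> {w. mk d w \<in> Y} \<and> y \<in> {w. mk d w \<in> Y}}"
    unfolding edges_def by auto
  then show ?case using step.IH by (rule rtrancl.rtrancl_into_rtrancl[rotated])
qed

lemma arith_window:
  fixes i i' p1 p2 q1 q2 :: int
  assumes "i' = i \<or> i' = i - 1"
    "max (2 * p1 - 2) (2 * q1 - 1) < i + i'" "i + i' \<le> min (2 * p2 + 2) (2 * q2 + 3)"
  shows "p1 \<le> i \<and> i \<le> p2 + 1 \<and> q1 \<le> i' \<and> i' \<le> q2 + 1"
  using assms by auto

lemma bridge_core:
  assumes fin: "finite X" and nh: "no_holes X" and pq: "(p, q) \<in> edges X"
    and ne: "portal d X p \<noteq> portal d X q"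
    and up: "snd (Tm d q) = snd (Tm d p) + 1"
  shows "(portal d X p, portal d X q) \<notin>
     (portal_edges d X - {(portal d X p, portal d X q), (portal d X q, portal d X p)})\<^sup>*"
proof
  define P where "P = portal d X p"
  define Q where "Q = portal d X q"
  assume "(portal d X p, portal d X q) \<in>
     (portal_edges d X - {(portal d X p, portal d X q), (portal d X q, portal d X p)})\<^sup>*"
  then have PQ: "(P, Q) \<in> (portal_edges d X - {(P, Q), (Q, P)})\<^sup>*" unfolding P_def Q_def .
  have pX: "p \<in> X" and qX: "q \<in> X" and tpq: "tri_adj p q" using pq unfolding edges_def by auto
  have "P \<noteq> Q" using ne unfolding P_def Q_def .
  have "q \<in> Q" unfolding Q_def using qX by (rule portal_self)
  then have "(p, q) \<in> (Good d X P Q)\<^sup>*" using V[OF PQ pX P_def \<open>P \<noteq> Q\<close>] by blast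
  then obtain n where "(p, q) \<in> (Good d X P Q) ^^ n" using rtrancl_imp_relpow by blast
  then obtain \<gamma> where g0: "\<gamma> 0 = p" and gn: "\<gamma> n = q" and gs: "\<forall>i<n. (\<gamma> i, \<gamma> (Suc i)) \<in> Good d X P Q"
    unfolding relpow_fun_conv by blast
  have gX: "\<gamma> k \<in> X" if "k \<le> n" for k
  proof (cases k)
    case 0 then show ?thesis using g0 pX by simp
  next
    case (Suc j)
    then have "(\<gamma> j, \<gamma> k) \<in> Good d X P Q" using gs that by auto
    then show ?thesis unfolding Good_def edges_def by auto
  qed
  define G where "G k = Tm d (if k \<le> n then \<gamma> k else p)" for k
  have cw: "cwalk G (Suc n)"
    unfolding cwalk_def
  proof (intro conjI allI impI)
    show "G 0 = G (Suc n)" unfolding G_def using g0 by simp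
  next
    fix k assume k: "k < Suc n"
    show "tri_adj (G k) (G (Suc k))"
    proof (cases "k < n")
      case True
      then have "(\<gamma> k, \<gamma> (Suc k)) \<in> Good d X P Q" using gs by auto
      then have "tri_adj (\<gamma> k) (\<gamma> (Suc k))" unfolding Good_def edges_def by auto
      then show ?thesis unfolding G_def using True by simp
    next
      case False
      then have "k = n" using k by simp
      then show ?thesis unfolding G_def using gn tri_adj_sym[OF tpq] by simp
    qed
  qed
  have GX: "mk d (G k) \<in> X" if "k \<le> Suc n" for k
    unfolding G_def using gX pX by auto
  define b where "b = snd (Tm d p)"
  obtain p1 p2 where sp: "p1 \<le> fst (Tm d p)" "fst (Tm d p) \<le> p2"
     "\<forall>f. p1 \<le> f \<and> f \<le> p2 \<longrightarrow> mk d (f, snd (Tm d p)) \<in> X"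
     "mk d (p1 - 1, snd (Tm d p)) \<notin> X" "mk d (p2 + 1, snd (Tm d p)) \<notin> X"
    using seg_exists[OF fin pX] by blast
  obtain q1 q2 where sq: "q1 \<le> fst (Tm d q)" "fst (Tm d q) \<le> q2"
     "\<forall>f. q1 \<le> f \<and> f \<le> q2 \<longrightarrow> mk d (f, snd (Tm d q)) \<in> X"
     "mk d (q1 - 1, snd (Tm d q)) \<notin> X" "mk d (q2 + 1, snd (Tm d q)) \<notin> X"
    using seg_exists[OF fin qX] by blast
  define tL where "tL = max (2 * p1 - 2) (2 * q1 - 1)"
  define tR where "tR = min (2 * p2 + 2) (2 * q2 + 3)"
  define zL where "zL = (if 2 * q1 - 1 \<le> 2 * p1 - 2 then (p1 - 1, b) else (q1 - 1, b + 1))"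
  define zR where "zR = (if 2 * p2 + 2 \<le> 2 * q2 + 3 then (p2 + 1, b) else (q2 + 1, b + 1))"
  have zLX: "mk d zL \<notin> X" unfolding zL_def b_def using sp(4) sq(4) up by auto
  have zRX: "mk d zR \<notin> X" unfolding zR_def b_def using sp(5) sq(5) up by auto
  \<comment> \<open>the last step lies in the window\<close>
  have fq: "fst (Tm d q) = fst (Tm d p) \<or> fst (Tm d q) = fst (Tm d p) - 1"
    using tri_Tm_cases[OF tpq, of d] up by auto
  \<comment> \<open>other steps are not in the window\<close>
  have window: "portal d X x = P \<and> portal d X y = Q"
    if "x \<in> X" "y \<in> X" "tri_adj x y" "snd (Tm d x) = b" "snd (Tm d y) = b + 1"
       "tL < fst (Tm d x) + fst (Tm d y)" "fst (Tm d x) + fst (Tm d y) \<le> tR" for x y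
  proof -
    have "fst (Tm d y) = fst (Tm d x) \<or> fst (Tm d y) = fst (Tm d x) - 1"
      using tri_Tm_cases[OF that(3), of d] that(4,5) by auto
    then have w: "p1 \<le> fst (Tm d x) \<and> fst (Tm d x) \<le> p2 + 1 \<and> q1 \<le> fst (Tm d y) \<and> fst (Tm d y) \<le> q2 + 1"
      using arith_window that(6,7) unfolding tL_def tR_def by blast
    have "fst (Tm d x) \<noteq> p2 + 1"
    proof
      assume "fst (Tm d x) = p2 + 1"
      then have "mk d (p2 + 1, snd (Tm d p)) = x" using that(4) unfolding b_def by (metis Tm_eta)
      then show False using sp(5) that(1) by simp
    qed
    moreover have "fst (Tm d y) \<noteq> q2 + 1"
    proof
      assume "fst (Tm d y) = q2 + 1"
      then have "mk d (q2 + 1, snd (Tm d q)) = y" using that(5) up unfolding b_def by (metis Tm_eta)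
      then show False using sq(5) that(2) by simp
    qed
    ultimately have "portal d X x = portal d X p" "portal d X y = portal d X q"
      using seg_portal[OF pX that(1) _ sp(1-3)] seg_portal[OF qX that(2) _ sq(1-3)] w that(4,5) up
      unfolding b_def by auto
    then show ?thesis unfolding P_def Q_def by simp
  qed
  have mid: "{k. k < Suc n \<and> strip b (G k) (G (Suc k)) \<and> tL < kap (G k) (G (Suc k)) \<and> kap (G k) (G (Suc k)) \<le> tR} = {n}"
  proof (intro set_eqI iffI)
    fix k assume "k \<in> {n}"
    then have k: "k = n" by simp
    have "G n = Tm d q" "G (Suc n) = Tm d p" unfolding G_def using gn by auto
    then show "k \<in> {k. k < Suc n \<and> strip b (G k) (G (Suc k)) \<and> tL < kap (G k) (G (Suc k)) \<and> kap (G k) (G (Suc k)) \<le> tR}"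
      using k up fq sp(1,2) sq(1,2) unfolding strip_def kap_def b_def tL_def tR_def by auto
  next
    fix k assume "k \<in> {k. k < Suc n \<and> strip b (G k) (G (Suc k)) \<and> tL < kap (G k) (G (Suc k)) \<and> kap (G k) (G (Suc k)) \<le> tR}"
    then have k: "k < Suc n" "strip b (G k) (G (Suc k))" "tL < kap (G k) (G (Suc k))" "kap (G k) (G (Suc k)) \<le> tR"
      by auto
    show "k \<in> {n}"
    proof (rule ccontr)
      assume "k \<notin> {n}"
      then have kn: "k < n" using k(1) by auto
      then have gd: "(\<gamma> k, \<gamma> (Suc k)) \<in> Good d X P Q" using gs by auto
      then have x: "\<gamma> k \<in> X" "\<gamma> (Suc k) \<in> X" "tri_adj (\<gamma> k) (\<gamma> (Suc k))"
        unfolding Good_def edges_def by auto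
      have Gk: "G k = Tm d (\<gamma> k)" "G (Suc k) = Tm d (\<gamma> (Suc k))" unfolding G_def using kn by auto
      from k(2) consider "snd (G k) = b \<and> snd (G (Suc k)) = b + 1" | "snd (G k) = b + 1 \<and> snd (G (Suc k)) = b"
        unfolding strip_def by blast
      then show False
      proof cases
        case 1
        then have "portal d X (\<gamma> k) = P \<and> portal d X (\<gamma> (Suc k)) = Q"
          using window[OF x] k(3,4) Gk unfolding kap_def by auto
        then show False using gd unfolding Good_def by auto
      next
        case 2
        then have "portal d X (\<gamma> (Suc k)) = P \<and> portal d X (\<gamma> k) = Q"
          using window[OF x(2) x(1) tri_adj_sym[OF x(3)]] k(3,4) Gk unfolding kap_def by (auto simp: add.commute)
        then show False using gd unfolding Good_def by auto
      qed
    qed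
  qed
  have tLR: "tL \<le> tR" using up fq sp(1,2) sq(1,2) unfolding tL_def tR_def by auto
  have Msplit: "Mc G (Suc n) b tL = Mc G (Suc n) b tR + 1"
    using M_split[OF tLR, of G "Suc n" b] mid by simp
  have "(mk d zL, mk d zR) \<in> (edges (- X))\<^sup>*"
    using nh zLX zRX unfolding no_holes_def induced_connected_def by auto
  from T_path[OF this, of d] have pth:
    "(zL, zR) \<in> {(x, y). tri_adj x y \<and> x \<in> {w. mk d w \<in> - X} \<and> y \<in> {w. mk d w \<in> - X}}\<^sup>*" by simp
  have avoid: "\<forall>k\<le>Suc n. G k \<notin> {w. mk d w \<in> - X}" using GX by auto
  have e1: "even (Nc G (Suc n) zL + Nc G (Suc n) zR)"
    using J1_path[OF cw avoid pth] zLX by auto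
  have avL: "\<forall>k\<le>Suc n. G k \<noteq> zL" using GX zLX by metis
  have avR: "\<forall>k\<le>Suc n. G k \<noteq> zR" using GX zRX by metis
  have e2: "even (Nc G (Suc n) zL + Mc G (Suc n) b tL)"
  proof (cases "2 * q1 - 1 \<le> 2 * p1 - 2")
    case True
    then have "Nc G (Suc n) zL = Mc G (Suc n) b tL" unfolding Nc_def zL_def tL_def by (simp add: algebra_simps)
    then show ?thesis by simp
  next
    case False
    have "even (Mc G (Suc n) (snd zL) (2 * fst zL) + Mc G (Suc n) (snd zL - 1) (2 * fst zL + 1))"
      using NN'[OF cw avL] .
    then show ?thesis using False unfolding Nc_def zL_def tL_def by (simp add: algebra_simps)
  qed
  have e3: "even (Nc G (Suc n) zR + Mc G (Suc n) b tR)"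
  proof (cases "2 * p2 + 2 \<le> 2 * q2 + 3")
    case True
    then have "Nc G (Suc n) zR = Mc G (Suc n) b tR" unfolding Nc_def zR_def tR_def by (simp add: algebra_simps)
    then show ?thesis by simp
  next
    case False
    have "even (Mc G (Suc n) (snd zR) (2 * fst zR) + Mc G (Suc n) (snd zR - 1) (2 * fst zR + 1))"
      using NN'[OF cw avR] .
    then show ?thesis using False unfolding Nc_def zR_def tR_def by (simp add: algebra_simps)
  qed
  show False using e1 e2 e3 Msplit by presburger
qed



lemma bridge:
  assumes fin: "finite X" and nh: "no_holes X" and pq: "(p, q) \<in> edges X"
    and ne: "portal d X p \<noteq> portal d X q"
  shows "(portal d X p, portal d X q) \<notin>
     (portal_edges d X - {(portal d X p, portal d X q), (portal d X q, portal d X p)})\<^sup>*"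
proof -
  have pX: "p \<in> X" and qX: "q \<in> X" and tpq: "tri_adj p q" using pq unfolding edges_def by auto
  have nd: "\<not> adj_dir d p q"
  proof
    assume "adj_dir d p q"
    then have "(p, q) \<in> edges_dir d X" unfolding edges_dir_def using pX qX by auto
    then have "q \<in> portal d X p" unfolding portal_def by auto
    then show False using portal_eq ne by metis
  qed
  from tri_Tm_cases[OF tpq, of d] nd consider "snd (Tm d q) = snd (Tm d p) + 1" | "snd (Tm d p) = snd (Tm d q) + 1"
    by force
  then show ?thesis
  proof cases
    case 1 then show ?thesis using bridge_core[OF fin nh pq ne] by blast
  next
    case 2
    have qp: "(q, p) \<in> edges X" using edges_sym[OF pq] .
    have A: "(portal d X q, portal d X p) \<notin>
     (portal_edges d X - {(portal d X q, portal d X p), (portal d X p, portal d X q)})\<^sup>*"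
      using bridge_core[OF fin nh qp ne[symmetric] 2] .
    let ?R = "portal_edges d X - {(portal d X p, portal d X q), (portal d X q, portal d X p)}"
    have eq: "{(portal d X q, portal d X p), (portal d X p, portal d X q)} = {(portal d X p, portal d X q), (portal d X q, portal d X p)}"
      by auto
    have sym: "(x, y) \<in> ?R \<Longrightarrow> (y, x) \<in> ?R" for x y using PE_sym by blast
    show ?thesis
    proof
      assume "(portal d X p, portal d X q) \<in> ?R\<^sup>*"
      then have "(portal d X q, portal d X p) \<in> ?R\<^sup>*" using rtrancl_symm[OF sym] by blast
      then show False using A unfolding eq by blast
    qed
  qed
qed

lemma chain:
  assumes "\<And>j. a \<le> j \<Longrightarrow> j < b \<Longrightarrow> h j = h (Suc j) \<or> (h j, h (Suc j)) \<in> R" "a \<le> b"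
  shows "(h a, h b) \<in> R\<^sup>*"
  using assms
proof (induction b)
  case 0 then show ?case by simp
next
  case (Suc b)
  show ?case
  proof (cases "a = Suc b")
    case True then show ?thesis by simp
  next
    case False
    then have ab: "a \<le> b" using Suc.prems by simp
    then have "(h a, h b) \<in> R\<^sup>*" using Suc by simp
    moreover have "h b = h (Suc b) \<or> (h b, h (Suc b)) \<in> R" using Suc.prems(1)[of b] ab by simp
    ultimately show ?thesis by (metis rtrancl.rtrancl_into_rtrancl)
  qed
qed

lemma walk_relpow:
  assumes "\<forall>k<n. (f k, f (Suc k)) \<in> R" "a \<le> b" "b \<le> n"
  shows "(f a, f b) \<in> R ^^ (b - a)"
  using assms(2,3)
proof (induction b)
  case 0 then show ?case by simp
next
  case (Suc b)
  show ?case
  proof (cases "a = Suc b")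
    case True then show ?thesis by simp
  next
    case False
    then have "a \<le> b" using Suc.prems by simp
    then have "(f a, f b) \<in> R ^^ (b - a)" using Suc by simp
    moreover have "(f b, f (Suc b)) \<in> R" using assms(1) Suc.prems by simp
    ultimately have "(f a, f (Suc b)) \<in> R ^^ Suc (b - a)" by (rule relpow_Suc_I)
    then show ?thesis using \<open>a \<le> b\<close> by (simp add: Suc_diff_le)
  qed
qed

lemma card_Suc_split: "card {k. k < Suc m \<and> P k} = card {k. k < m \<and> P k} + (if P m then 1 else 0)"
proof -
  have fin: "finite {k. k < m \<and> P k}" by (rule finite_subset[of _ "{..<m}"]) auto
  show ?thesis
  proof (cases "P m")
    case True
    then have "{k. k < Suc m \<and> P k} = insert m {k. k < m \<and> P k}" by (auto simp: less_Suc_eq)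
    then show ?thesis using fin True by simp
  next
    case False
    then have "{k. k < Suc m \<and> P k} = {k. k < m \<and> P k}" by (auto simp: less_Suc_eq)
    then show ?thesis using False by simp
  qed
qed

lemma portal_same_iff:
  assumes "(x, y) \<in> edges X"
  shows "portal d X x = portal d X y \<longleftrightarrow> adj_dir d x y"
proof
  have xX: "x \<in> X" and yX: "y \<in> X" and t: "tri_adj x y" using assms unfolding edges_def by auto
  {
    assume "portal d X x = portal d X y"
    then have "y \<in> portal d X x" using portal_self[OF yX] by simp
    then have "snd (Tm d y) = snd (Tm d x)" using portal_line[OF xX] by blast
    then show "adj_dir d x y" using tri_Tm_cases[OF t, of d] by auto
  }
  {
    assume "adj_dir d x y"
    then have "(x, y) \<in> edges_dir d X" unfolding edges_dir_def using xX yX by auto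
    then have "y \<in> portal d X x" unfolding portal_def by auto
    then show "portal d X x = portal d X y" using portal_eq by metis
  }
qed

lemma two_change:
  assumes "(x, y) \<in> edges X"
  shows "(if portal AxX X x \<noteq> portal AxX X y then 1 else 0) + (if portal AxY X x \<noteq> portal AxY X y then 1 else 0)
       + (if portal AxZ X x \<noteq> portal AxZ X y then 1 else (0::nat)) = 2"
proof -
  have t: "tri_adj x y" using assms unfolding edges_def by auto
  obtain d0 where d0: "adj_dir d0 x y" using tri_some_dir[OF t] by blast
  have u: "adj_dir d x y \<longleftrightarrow> d = d0" for d using tri_dir_unique d0 by blast
  show ?thesis unfolding portal_same_iff[OF assms] u by (cases d0) auto
qed

lemma step_bound:
  assumes "tri_adj x y" shows "\<bar>fst (Tm d y) - fst (Tm d x)\<bar> \<le> 1"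
  using tri_Tm_cases[OF assms, of d] by auto



locale gw =
  fixes X :: "vtx set" and f :: "nat \<Rightarrow> vtx" and n :: nat
  assumes fin: "finite X" and nh: "no_holes X" and f0X: "f 0 \<in> X"
    and steps: "\<forall>k<n. (f k, f (Suc k)) \<in> edges X"
    and geo: "\<And>i j m. i \<le> j \<Longrightarrow> j \<le> n \<Longrightarrow> (f i, f j) \<in> (edges X) ^^ m \<Longrightarrow> j - i \<le> m"
begin

lemma fX: "k \<le> n \<Longrightarrow> f k \<in> X"
proof (cases k)
  case 0 then show ?thesis using f0X by simp
next
  case (Suc j)
  assume "k \<le> n"
  then have "(f j, f k) \<in> edges X" using steps Suc by auto
  then show ?thesis unfolding edges_def by auto
qed

lemma W1: "i \<le> j \<Longrightarrow> j \<le> n \<Longrightarrow> \<bar>fst (Tm d (f j)) - fst (Tm d (f i))\<bar> \<le> int (j - i)"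
proof (induction j)
  case 0 then show ?case by simp
next
  case (Suc j)
  show ?case
  proof (cases "i = Suc j")
    case True then show ?thesis by simp
  next
    case False
    then have ij: "i \<le> j" using Suc.prems by simp
    then have IH: "\<bar>fst (Tm d (f j)) - fst (Tm d (f i))\<bar> \<le> int (j - i)" using Suc by simp
    have "tri_adj (f j) (f (Suc j))" using steps Suc.prems unfolding edges_def by auto
    then have "\<bar>fst (Tm d (f (Suc j))) - fst (Tm d (f j))\<bar> \<le> 1" by (rule step_bound)
    then show ?thesis using IH ij by (simp add: of_nat_diff)
  qed
qed

definition g :: "axis \<Rightarrow> nat \<Rightarrow> vtx set" where
  "g d k = portal d X (f k)"

definition K :: "axis \<Rightarrow> nat set" where
  "K d = {k. k < n \<and> g d k \<noteq> g d (Suc k)}"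

definition Rm :: "axis \<Rightarrow> nat \<Rightarrow> (vtx set \<times> vtx set) set" where
  "Rm d k = portal_edges d X - {(g d k, g d (Suc k)), (g d (Suc k), g d k)}"

lemma Rm_sym: "(x, y) \<in> Rm d k \<Longrightarrow> (y, x) \<in> Rm d k"
  unfolding Rm_def using PE_sym by blast

lemma step_PE: "k < n \<Longrightarrow> g d k \<noteq> g d (Suc k) \<Longrightarrow> (g d k, g d (Suc k)) \<in> portal_edges d X"
proof -
  assume k: "k < n" "g d k \<noteq> g d (Suc k)"
  have a: "f k \<in> X" "f (Suc k) \<in> X" "(f k, f (Suc k)) \<in> edges X" using fX[of k] fX[of "Suc k"] steps k by auto
  have "g d k \<in> portals d X" "g d (Suc k) \<in> portals d X" unfolding portals_def g_def using a by auto
  moreover have "f k \<in> g d k" "f (Suc k) \<in> g d (Suc k)" unfolding g_def using a portal_self by auto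
  ultimately show ?thesis unfolding portal_edges_def using k(2) a(3) by blast
qed

lemma bridge_k:
  assumes "k \<in> K d"
  shows "(g d k, g d (Suc k)) \<notin> (Rm d k)\<^sup>*" "(g d (Suc k), g d k) \<notin> (Rm d k)\<^sup>*"
proof -
  have k: "k < n" "g d k \<noteq> g d (Suc k)" using assms unfolding K_def by auto
  have "(f k, f (Suc k)) \<in> edges X" using steps k by auto
  from bridge[OF fin nh this] k(2) show A: "(g d k, g d (Suc k)) \<notin> (Rm d k)\<^sup>*"
    unfolding Rm_def g_def by blast
  show "(g d (Suc k), g d k) \<notin> (Rm d k)\<^sup>*"
    using A rtrancl_symm[OF Rm_sym] by blast
qed

lemma shortcut:
  assumes "k < k'" "k' < n" "g d k' = g d (Suc k)" "g d (Suc k') = g d k" "g d k \<noteq> g d (Suc k)"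
  shows False
proof -
  let ?F = "\<lambda>x. fst (Tm d x)" and ?L = "\<lambda>x. snd (Tm d x)"
  have X1: "f (Suc k) \<in> X" "f k' \<in> X" "f k \<in> X" "f (Suc k') \<in> X" using fX assms by auto
  have "f k' \<in> portal d X (f (Suc k))" using assms(3) portal_self[OF X1(2), of d] unfolding g_def by simp
  then have L1: "?L (f k') = ?L (f (Suc k))" using portal_line[OF X1(1)] by blast
  have mem2: "f (Suc k') \<in> portal d X (f k)" using assms(4) portal_self[OF X1(4), of d] unfolding g_def by simp
  then have L2: "?L (f (Suc k')) = ?L (f k)" using portal_line[OF X1(3)] by blast
  have e1: "(f k, f (Suc k)) \<in> edges X" and e2: "(f k', f (Suc k')) \<in> edges X" using steps assms by auto
  have nd1: "\<not> adj_dir d (f k) (f (Suc k))" using portal_same_iff[OF e1, of d] assms(5) unfolding g_def by simp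
  have nd2: "\<not> adj_dir d (f k') (f (Suc k'))" using portal_same_iff[OF e2, of d] assms(3,4,5) unfolding g_def by simp
  have t1: "tri_adj (f k) (f (Suc k))" and t2: "tri_adj (f k') (f (Suc k'))" using e1 e2 unfolding edges_def by auto
  have mid: "\<bar>?F (f k') - ?F (f (Suc k))\<bar> \<le> int (k' - Suc k)" using W1[of "Suc k" k' d] assms by simp
  have A1: "(?L (f (Suc k)) = ?L (f k) + 1 \<and> (?F (f (Suc k)) = ?F (f k) \<or> ?F (f (Suc k)) = ?F (f k) - 1)) \<or>
            (?L (f (Suc k)) = ?L (f k) - 1 \<and> (?F (f (Suc k)) = ?F (f k) \<or> ?F (f (Suc k)) = ?F (f k) + 1))"
    using tri_Tm_cases[OF t1, of d] nd1 by auto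
  have A2: "(?L (f (Suc k')) = ?L (f k') + 1 \<and> (?F (f (Suc k')) = ?F (f k') \<or> ?F (f (Suc k')) = ?F (f k') - 1)) \<or>
            (?L (f (Suc k')) = ?L (f k') - 1 \<and> (?F (f (Suc k')) = ?F (f k') \<or> ?F (f (Suc k')) = ?F (f k') + 1))"
    using tri_Tm_cases[OF t2, of d] nd2 by auto
  have m2: "int (k' - Suc k) + 1 = int (k' - k)" using assms(1) by simp
  have tot: "\<bar>?F (f (Suc k')) - ?F (f k)\<bar> \<le> int (k' - k)"
    using A1 A2 L1 L2 mid m2 by linarith
  have "(f k, f (Suc k')) \<in> (edges X) ^^ nat \<bar>?F (f (Suc k')) - ?F (f k)\<bar>"
    using portal_walk[OF X1(3) mem2] .
  then have "Suc k' - k \<le> nat \<bar>?F (f (Suc k')) - ?F (f k)\<bar>" using geo[of k "Suc k'"] assms by simp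
  then show False using tot assms(1) by linarith
qed

end



context gw begin

definition e :: "axis \<Rightarrow> nat \<Rightarrow> vtx set set" where
  "e d k = {g d k, g d (Suc k)}"

lemma Rm_step:
  assumes "j < n" "g d j \<noteq> g d (Suc j)" "e d j \<noteq> e d k"
  shows "(g d j, g d (Suc j)) \<in> Rm d k"
proof -
  have "(g d j, g d (Suc j)) \<in> portal_edges d X" using step_PE assms by blast
  moreover have "(g d j, g d (Suc j)) \<notin> {(g d k, g d (Suc k)), (g d (Suc k), g d k)}"
    using assms(3) unfolding e_def by auto
  ultimately show ?thesis unfolding Rm_def by blast
qed

lemma distinct_e:
  assumes "k \<in> K d" "k' \<in> K d" "k < k'"
  shows "e d k \<noteq> e d k'"
proof
  assume eq: "e d k = e d k'"
  define k0 where "k0 = (LEAST j. j \<in> K d \<and> k < j \<and> e d j = e d k)"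
  have ex: "k' \<in> K d \<and> k < k' \<and> e d k' = e d k" using assms eq by simp
  have k0: "k0 \<in> K d" "k < k0" "e d k0 = e d k"
    using LeastI[of "\<lambda>j. j \<in> K d \<and> k < j \<and> e d j = e d k", OF ex] unfolding k0_def by auto
  have minl: "e d j \<noteq> e d k" if "j \<in> K d" "k < j" "j < k0" for j
    using not_less_Least[of j "\<lambda>j. j \<in> K d \<and> k < j \<and> e d j = e d k"] that unfolding k0_def by blast
  have kn: "k < n" "g d k \<noteq> g d (Suc k)" using assms(1) unfolding K_def by auto
  have k0n: "k0 < n" "g d k0 \<noteq> g d (Suc k0)" using k0(1) unfolding K_def by auto
  have ch: "(g d (Suc k), g d k0) \<in> (Rm d k)\<^sup>*"
  proof (rule chain)
    fix j assume j: "Suc k \<le> j" "j < k0"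
    show "g d j = g d (Suc j) \<or> (g d j, g d (Suc j)) \<in> Rm d k"
    proof (cases "g d j = g d (Suc j)")
      case False
      then have "j \<in> K d" using j k0n unfolding K_def by auto
      then have "e d j \<noteq> e d k" using minl j by auto
      then show ?thesis using Rm_step[of j d k] False j k0n by auto
    qed simp
  qed (use k0 in simp)
  from k0(3) k0n(2) have "(g d k0 = g d k \<and> g d (Suc k0) = g d (Suc k)) \<or> (g d k0 = g d (Suc k) \<and> g d (Suc k0) = g d k)"
    unfolding e_def by (auto simp: doubleton_eq_iff)
  then show False
  proof
    assume "g d k0 = g d k \<and> g d (Suc k0) = g d (Suc k)"
    then show False using ch bridge_k(2)[OF assms(1)] by simp
  next
    assume "g d k0 = g d (Suc k) \<and> g d (Suc k0) = g d k"
    then show False using shortcut[OF k0(2) k0n(1)] kn(2) by blast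
  qed
qed

lemma inj_e: "inj_on (e d) (K d)"
proof (rule inj_onI)
  fix k k' assume "k \<in> K d" "k' \<in> K d" "e d k = e d k'"
  then show "k = k'" using distinct_e[of k d k'] distinct_e[of k' d k] by (cases "k < k'"; cases "k' < k") auto
qed

lemma cover:
  assumes h0: "h 0 = g d 0" and hm: "h m = g d n" and hs: "\<forall>j<m. (h j, h (Suc j)) \<in> portal_edges d X"
    and k: "k \<in> K d"
  shows "\<exists>j<m. {h j, h (Suc j)} = e d k"
proof (rule ccontr)
  assume "\<not> (\<exists>j<m. {h j, h (Suc j)} = e d k)"
  then have nh: "\<forall>j<m. {h j, h (Suc j)} \<noteq> e d k" by blast
  have kn: "k < n" "g d k \<noteq> g d (Suc k)" using k unfolding K_def by auto
  have c1: "(h 0, h m) \<in> (Rm d k)\<^sup>*"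
  proof (rule chain)
    fix j assume j: "0 \<le> j" "j < m"
    have "(h j, h (Suc j)) \<notin> {(g d k, g d (Suc k)), (g d (Suc k), g d k)}"
      using nh j unfolding e_def by auto
    then show "h j = h (Suc j) \<or> (h j, h (Suc j)) \<in> Rm d k" using hs j unfolding Rm_def by blast
  qed simp
  have c2: "(g d 0, g d k) \<in> (Rm d k)\<^sup>*"
  proof (rule chain)
    fix j assume j: "0 \<le> j" "j < k"
    show "g d j = g d (Suc j) \<or> (g d j, g d (Suc j)) \<in> Rm d k"
    proof (cases "g d j = g d (Suc j)")
      case False
      then have "j \<in> K d" using j kn unfolding K_def by auto
      then have "e d j \<noteq> e d k" using distinct_e[OF _ k] j by blast
      then show ?thesis using Rm_step[of j d k] False j kn by auto
    qed simp
  qed simp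
  have c3: "(g d (Suc k), g d n) \<in> (Rm d k)\<^sup>*"
  proof (rule chain)
    fix j assume j: "Suc k \<le> j" "j < n"
    show "g d j = g d (Suc j) \<or> (g d j, g d (Suc j)) \<in> Rm d k"
    proof (cases "g d j = g d (Suc j)")
      case False
      then have "j \<in> K d" using j unfolding K_def by auto
      then have "e d j \<noteq> e d k" using distinct_e[OF k] j by (metis Suc_le_lessD)
      then show ?thesis using Rm_step[of j d k] False j by auto
    qed simp
  qed (use kn in simp)
  have "(h m, h 0) \<in> (Rm d k)\<^sup>*" using c1 rtrancl_symm[OF Rm_sym] by blast
  then have "(g d n, g d 0) \<in> (Rm d k)\<^sup>*" using h0 hm by simp
  then have "(g d (Suc k), g d k) \<in> (Rm d k)\<^sup>*" using c2 c3 by (meson rtrancl_trans)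
  then show False using bridge_k(2)[OF k] by simp
qed

lemma E2: "m \<le> n \<Longrightarrow> (g d 0, g d m) \<in> (portal_edges d X) ^^ card {k. k < m \<and> g d k \<noteq> g d (Suc k)}"
proof (induction m)
  case 0 then show ?case by simp
next
  case (Suc m)
  then have IH: "(g d 0, g d m) \<in> (portal_edges d X) ^^ card {k. k < m \<and> g d k \<noteq> g d (Suc k)}" by simp
  show ?case
  proof (cases "g d m = g d (Suc m)")
    case True
    then show ?thesis using IH card_Suc_split[of m "\<lambda>k. g d k \<noteq> g d (Suc k)"] by simp
  next
    case False
    then have "(g d m, g d (Suc m)) \<in> portal_edges d X" using step_PE Suc.prems by simp
    then have "(g d 0, g d (Suc m)) \<in> (portal_edges d X) ^^ Suc (card {k. k < m \<and> g d k \<noteq> g d (Suc k)})"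
      using IH by (rule relpow_Suc_I[rotated])
    then show ?thesis using card_Suc_split[of m "\<lambda>k. g d k \<noteq> g d (Suc k)"] False by simp
  qed
qed

lemma dist_dir_eq: "dist_dir d X (f 0) (f n) = card (K d)"
proof -
  have w: "(g d 0, g d n) \<in> (portal_edges d X) ^^ card (K d)" unfolding K_def by (rule E2[OF order_refl])
  have dd: "dist_dir d X (f 0) (f n) = (LEAST m. (g d 0, g d n) \<in> (portal_edges d X) ^^ m)"
    unfolding dist_dir_def gdist_def g_def by simp
  have le: "dist_dir d X (f 0) (f n) \<le> card (K d)" unfolding dd using w by (rule Least_le)
  define m0 where "m0 = dist_dir d X (f 0) (f n)"
  have "(g d 0, g d n) \<in> (portal_edges d X) ^^ m0" unfolding m0_def dd using w by (rule LeastI)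
  then obtain h where h0: "h 0 = g d 0" and hm: "h m0 = g d n" and hs: "\<forall>j<m0. (h j, h (Suc j)) \<in> portal_edges d X"
    unfolding relpow_fun_conv by blast
  have "e d ` K d \<subseteq> (\<lambda>j. {h j, h (Suc j)}) ` {..<m0}"
  proof
    fix s assume "s \<in> e d ` K d"
    then obtain k where k: "k \<in> K d" "s = e d k" by blast
    then obtain j where "j < m0" "{h j, h (Suc j)} = e d k" using cover[OF h0 hm hs] by blast
    then show "s \<in> (\<lambda>j. {h j, h (Suc j)}) ` {..<m0}" using k(2) by (intro image_eqI[of _ _ j]) auto
  qed
  then have "card (e d ` K d) \<le> card ((\<lambda>j. {h j, h (Suc j)}) ` {..<m0})" by (rule card_mono[rotated]) simp
  also have "\<dots> \<le> m0" using card_image_le[of "{..<m0}" "\<lambda>j. {h j, h (Suc j)}"] by simp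
  finally have "card (K d) \<le> m0" using card_image[OF inj_e] by simp
  then show ?thesis using le unfolding m0_def by simp
qed

lemma sum_K: "m \<le> n \<Longrightarrow> card {k. k < m \<and> g AxX k \<noteq> g AxX (Suc k)} + card {k. k < m \<and> g AxY k \<noteq> g AxY (Suc k)}
   + card {k. k < m \<and> g AxZ k \<noteq> g AxZ (Suc k)} = 2 * m"
proof (induction m)
  case 0 then show ?case by simp
next
  case (Suc m)
  have "(f m, f (Suc m)) \<in> edges X" using steps Suc.prems by simp
  from two_change[OF this] have "(if g AxX m \<noteq> g AxX (Suc m) then 1 else 0) + (if g AxY m \<noteq> g AxY (Suc m) then 1 else 0)
       + (if g AxZ m \<noteq> g AxZ (Suc m) then 1 else (0::nat)) = 2" unfolding g_def .
  then show ?case using Suc card_Suc_split[of m] by simp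
qed

lemma main_eq: "2 * n = dist_dir AxX X (f 0) (f n) + dist_dir AxY X (f 0) (f n) + dist_dir AxZ X (f 0) (f n)"
  using sum_K[of n] unfolding dist_dir_eq K_def by simp

end

theorem mainTheorem3:
  fixes X :: "vtx set"
  assumes "finite X" and "induced_connected X" and "no_holes X"
      and "u \<in> X" and "v \<in> X"
  shows "2 * dist X u v = dist_dir AxX X u v + dist_dir AxY X u v + dist_dir AxZ X u v"
proof -
  have "(u, v) \<in> (edges X)\<^sup>*" using assms(2,4,5) unfolding induced_connected_def by blast
  then have ex: "\<exists>n. (u, v) \<in> (edges X) ^^ n" using rtrancl_imp_relpow by blast
  define n where "n = dist X u v"
  have nL: "n = (LEAST n. (u, v) \<in> (edges X) ^^ n)" unfolding n_def dist_def gdist_def by simp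
  have "(u, v) \<in> (edges X) ^^ n" unfolding nL using ex by (rule LeastI_ex)
  then obtain f where f0: "f 0 = u" and fn: "f n = v" and fs: "\<forall>i<n. (f i, f (Suc i)) \<in> edges X"
    unfolding relpow_fun_conv by blast
  have geo: "j - i \<le> m" if ij: "i \<le> j" "j \<le> n" "(f i, f j) \<in> (edges X) ^^ m" for i j m
  proof -
    have a: "(u, f i) \<in> (edges X) ^^ i" using walk_relpow[OF fs, of 0 i] ij f0 by simp
    have b: "(f j, v) \<in> (edges X) ^^ (n - j)" using walk_relpow[OF fs, of j n] ij fn by simp
    have "(u, v) \<in> (edges X) ^^ (i + m + (n - j))" using relpow_trans[OF relpow_trans[OF a ij(3)] b] .
    then have "n \<le> i + m + (n - j)" unfolding nL by (rule Least_le)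
    then show ?thesis using ij by linarith
  qed
  have fX0: "f 0 \<in> X" using f0 assms(4) by simp
  interpret gw X f n
    using assms(1,3) fX0 fs geo by unfold_locales blast+
  show ?thesis using main_eq f0 fn unfolding n_def by simp
qed

end
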